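(* Let $X=(X(s))_{s\in\mathbb R^2}$ be an isotropic standard Gaussian process whose auto-correlation function $\rho$ decreases to $0$ as $h\to\infty$, let $u\in\mathbb R_+$ and let $\mathcal A$ be either a disk or a square. Then $$\lim_{\lambda\to\infty}\mathcal R_1(\lambda\mathcal A,\mathcal D^+_{X,u})=0.$$
   Context: Isotropic standard Gaussian: $\mathbb E X(s)=0$, $\mathrm{Var}X(s)=1$, $\mathrm{Cov}(X(s),X(t))=\rho(\|s-t\|)$. $\lambda\mathcal A=\{\lambda x:x\in\mathcal A\}$. $\mathcal R_1(\mathcal B,\mathcal D^+_{X,u})=\mathrm{Var}\big(\frac1{|\mathcal B|}\int_{\mathcal B}(X(s)-u)^+\,\mathrm ds\big)$ with $|\mathcal B|$ the Lebesgue measure of $\mathcal B$. *)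

theory Defs
  imports "HOL-Probability.Probability"
begin

definition gaussian_process :: "'a measure \<Rightarrow> ('s \<Rightarrow> 'a \<Rightarrow> real) \<Rightarrow> bool" where
  "gaussian_process M X \<longleftrightarrow>
     (\<forall>s. X s \<in> borel_measurable M) \<and>
     (\<forall>(S::'s set) (c::'s \<Rightarrow> real). finite S \<longrightarrow>
        (\<exists>m v. v \<ge> 0 \<and> (\<forall>t. char (distr M borel (\<lambda>\<omega>. \<Sum>s\<in>S. c s * X s \<omega>)) t
                 = exp (\<i> * complex_of_real (t * m) - complex_of_real (v * t\<^sup>2 / 2)))))"

definition isotropic_standard_gaussian ::
    "'a measure \<Rightarrow> (real^2 \<Rightarrow> 'a \<Rightarrow> real) \<Rightarrow> (real \<Rightarrow> real) \<Rightarrow> bool" where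
  "isotropic_standard_gaussian M X \<rho> \<longleftrightarrow>
     prob_space M \<and> gaussian_process M X \<and>
     (\<forall>s. prob_space.expectation M (X s) = 0) \<and>
     (\<forall>s. prob_space.variance M (X s) = 1) \<and>
     (\<forall>s t. prob_space.expectation M
              (\<lambda>\<omega>. (X s \<omega> - prob_space.expectation M (X s)) * (X t \<omega> - prob_space.expectation M (X t)))
            = \<rho> (norm (s - t)))"

definition is_disk :: "(real^2) set \<Rightarrow> bool" where
  "is_disk A \<longleftrightarrow> (\<exists>c r. r > 0 \<and> A = cball c r)"

definition is_square :: "(real^2) set \<Rightarrow> bool" where
  "is_square A \<longleftrightarrow> (\<exists>p e1 e2 L. L > 0 \<and> norm e1 = 1 \<and> norm e2 = 1 \<and> e1 \<bullet> e2 = 0 \<and>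
      A = {p + a *\<^sub>R e1 + b *\<^sub>R e2 | a b. a \<in> {0..L} \<and> b \<in> {0..L}})"

text \<open>R_1(B, D^+_{X,u}) = Var( (1/|B|) \<integral>_B (X(s)-u)^+ ds ).\<close>
definition R1 :: "'a measure \<Rightarrow> (real^2 \<Rightarrow> 'a \<Rightarrow> real) \<Rightarrow> real \<Rightarrow> (real^2) set \<Rightarrow> real" where
  "R1 M X u B = prob_space.variance M
      (\<lambda>\<omega>. (1 / measure lborel B) * (LINT s:B|lborel. max 0 (X s \<omega> - u)))"

end

theory Submission
  imports Defs
begin


lemma (in prob_space) gauss_ident:
  fixes Z :: "'a \<Rightarrow> real" and m v :: real
  assumes Zm[measurable]: "Z \<in> borel_measurable M"
    and Z2: "integrable M (\<lambda>x. (Z x)^2)" and Z0: "expectation Z = 0"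
    and ch: "\<And>t. char (distr M borel Z) t = exp (\<i> * complex_of_real (t * m) - complex_of_real (v * t^2/2))"
  shows "m = 0 \<and> v = expectation (\<lambda>x. (Z x)^2)"
proof -
  have Zi: "integrable M Z" using square_integrable_imp_integrable[OF Zm Z2] .
  define \<sigma> where "\<sigma> = expectation (\<lambda>x. (Z x)^2)"
  have var: "variance Z = \<sigma>" using Z0 by (simp add: \<sigma>_def)
  define e where "e t = expectation (\<lambda>x. min (6 * (Z x)^2) (\<bar>t\<bar> * \<bar>Z x\<bar>^3))" for t
  have approx: "cmod (char (distr M borel Z) t - (1 - t^2 * \<sigma> / 2)) \<le> t^2/6 * e t" for t
    unfolding e_def by (rule char_approx3'[OF _ Zi Z2 Z0 var refl]) simp
  have eint: "integrable M (\<lambda>x. min (6 * (Z x)^2) (\<bar>t\<bar> * \<bar>Z x\<bar>^3))" for t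
    by (rule Bochner_Integration.integrable_bound[OF integrable_mult_right[OF Z2, of 6]]) auto
  have e_le: "e t \<le> 6 * \<sigma>" for t
  proof -
    have "e t \<le> expectation (\<lambda>x. 6 * (Z x)^2)"
      unfolding e_def by (rule integral_mono[OF eint]) (use Z2 in auto)
    then show ?thesis by (simp add: \<sigma>_def)
  qed
  have im_bound: "exp (-(v * t^2/2)) * \<bar>sin (t * m)\<bar> \<le> t^2 * \<sigma>" for t
  proof -
    have "\<bar>Im (char (distr M borel Z) t - (1 - t^2 * \<sigma> / 2))\<bar> \<le> t^2/6 * e t"
      using abs_Im_le_cmod approx order_trans by blast
    also have "\<dots> \<le> t^2/6 * (6*\<sigma>)" by (intro mult_left_mono e_le) auto
    also have "Im (char (distr M borel Z) t - (1 - t^2 * \<sigma> / 2)) = exp (-(v * t^2/2)) * sin (t * m)"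
      by (simp add: ch Im_exp Re_exp)
    finally show ?thesis by (simp add: abs_mult)
  qed
  have m0: "m = 0"
  proof -
    have "((\<lambda>h. sin (h*m)) has_real_derivative m) (at 0)"
      by (auto intro!: derivative_eq_intros)
    from DERIV_D[OF this] have L1: "((\<lambda>h. sin (h*m) / h) \<longlongrightarrow> m) (at 0)" by simp
    have L2: "((\<lambda>h. \<bar>h\<bar> * \<sigma> * exp (v * h^2/2)) \<longlongrightarrow> 0) (at 0)"
    proof -
      have "((\<lambda>h. \<bar>h\<bar> * \<sigma> * exp (v * h^2/2)) \<longlongrightarrow> \<bar>0\<bar> * \<sigma> * exp (v * 0^2/2)) (at 0)"
        by (intro tendsto_intros) auto
      then show ?thesis by simp
    qed
    have ev: "eventually (\<lambda>h. \<bar>sin (h*m) / h\<bar> \<le> \<bar>h\<bar> * \<sigma> * exp (v * h^2/2)) (at 0)"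
      unfolding eventually_at_filter
    proof (intro always_eventually allI impI)
      fix h :: real assume "h \<noteq> 0"
      have "\<bar>sin (h*m)\<bar> \<le> h^2 * \<sigma> * exp (v * h^2/2)"
        using im_bound[of h] by (simp add: exp_minus field_simps)
      then show "\<bar>sin (h*m) / h\<bar> \<le> \<bar>h\<bar> * \<sigma> * exp (v * h^2/2)"
        using \<open>h \<noteq> 0\<close> by (simp add: abs_div divide_le_eq power2_eq_square abs_mult mult_ac)
    qed
    have "\<bar>m\<bar> \<le> 0"
      by (rule tendsto_le[OF _ L2 tendsto_rabs[OF L1] ev]) simp
    then show ?thesis by simp
  qed
  have re_bound: "\<bar>exp (-(v * t^2/2)) - 1 + t^2 * \<sigma> / 2\<bar> \<le> t^2/6 * e t" for t
  proof -
    have "char (distr M borel Z) t - (1 - t^2 * \<sigma> / 2) = complex_of_real (exp (-(v * t^2/2)) - 1 + t^2 * \<sigma> / 2)"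
      by (simp add: ch m0 exp_of_real[symmetric])
    then have "cmod (char (distr M borel Z) t - (1 - t^2 * \<sigma> / 2)) = \<bar>exp (-(v * t^2/2)) - 1 + t^2 * \<sigma> / 2\<bar>"
      by (simp only: norm_of_real)
    then show ?thesis using approx[of t] by simp
  qed
  define h where "h n = inverse (real (Suc n))" for n
  have h0: "h \<longlonglongrightarrow> 0" unfolding h_def by (rule LIMSEQ_inverse_real_of_nat)
  have hnz: "h n \<noteq> 0" for n by (simp add: h_def)
  have hsq: "filterlim (\<lambda>n. (h n)^2) (at 0) sequentially"
  proof -
    have "(\<lambda>n. (h n)^2) \<longlonglongrightarrow> 0^2" by (intro tendsto_intros h0)
    then show ?thesis using hnz by (auto simp: filterlim_at)
  qed
  have "((\<lambda>x. exp (-(v * x/2))) has_real_derivative (-(v/2))) (at 0)"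
    by (auto intro!: derivative_eq_intros)
  from DERIV_D[OF this] have "((\<lambda>x. (exp (-(v * x/2)) - 1) / x) \<longlongrightarrow> -(v/2)) (at 0)" by simp
  from filterlim_compose[OF this hsq]
  have L3: "(\<lambda>n. (exp (-(v * (h n)^2/2)) - 1) / (h n)^2) \<longlonglongrightarrow> -(v/2)" by simp
  have L4: "(\<lambda>n. e (h n)) \<longlonglongrightarrow> 0"
  proof -
    have "(\<lambda>n. e (h n)) \<longlonglongrightarrow> expectation (\<lambda>x. 0)"
      unfolding e_def
    proof (rule integral_dominated_convergence[where w="\<lambda>x. 6 * (Z x)^2"])
      show "integrable M (\<lambda>x. 6 * (Z x)^2)" using Z2 by auto
      show "AE x in M. (\<lambda>n. min (6 * (Z x)^2) (\<bar>h n\<bar> * \<bar>Z x\<bar>^3)) \<longlonglongrightarrow> 0"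
      proof (intro AE_I2)
        fix x
        have "(\<lambda>n. min (6 * (Z x)^2) (\<bar>h n\<bar> * \<bar>Z x\<bar>^3)) \<longlonglongrightarrow> min (6 * (Z x)^2) (\<bar>0\<bar> * \<bar>Z x\<bar>^3)"
          by (intro tendsto_intros h0)
        then show "(\<lambda>n. min (6 * (Z x)^2) (\<bar>h n\<bar> * \<bar>Z x\<bar>^3)) \<longlonglongrightarrow> 0" by simp
      qed
      show "AE x in M. norm (min (6 * (Z x)^2) (\<bar>h n\<bar> * \<bar>Z x\<bar>^3)) \<le> 6 * (Z x)^2" for n
        by (intro AE_I2) auto
    qed auto
    then show ?thesis by simp
  qed
  have L5: "(\<lambda>n. \<bar>(exp (-(v * (h n)^2/2)) - 1) / (h n)^2 + \<sigma>/2\<bar>) \<longlonglongrightarrow> \<bar>-(v/2) + \<sigma>/2\<bar>"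
    by (intro tendsto_intros L3)
  have L6: "(\<lambda>n. e (h n) / 6) \<longlonglongrightarrow> 0 / 6" by (intro tendsto_intros L4) auto
  have ev2: "\<bar>(exp (-(v * (h n)^2/2)) - 1) / (h n)^2 + \<sigma>/2\<bar> \<le> e (h n) / 6" for n
  proof -
    have p: "(h n)^2 > 0" using hnz by simp
    have "\<bar>(exp (-(v * (h n)^2/2)) - 1) / (h n)^2 + \<sigma>/2\<bar> = \<bar>exp (-(v * (h n)^2/2)) - 1 + (h n)^2 * \<sigma> / 2\<bar> / (h n)^2"
      using p by (simp add: field_simps abs_div)
    also have "\<dots> \<le> ((h n)^2/6 * e (h n)) / (h n)^2"
      by (intro divide_right_mono re_bound) simp
    also have "\<dots> = e (h n) / 6" using p by simp
    finally show ?thesis .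
  qed
  have "\<bar>-(v/2) + \<sigma>/2\<bar> \<le> 0 / 6"
    by (rule tendsto_le[OF _ L6 L5]) (use ev2 in auto)
  then have "v = \<sigma>" by simp
  with m0 show ?thesis by (simp add: \<sigma>_def)
qed



lemma (in prob_space) weighted_levy:
  fixes Z g :: "'a \<Rightarrow> real" and c :: real
  assumes Zm[measurable]: "Z \<in> borel_measurable M" and gm[measurable]: "g \<in> borel_measurable M"
    and gnn: "\<And>x. x \<in> space M \<Longrightarrow> 0 \<le> g x" and gi: "integrable M g"
    and c: "expectation g = c" "c > 0"
    and ch: "\<And>a. (CLINT x|M. complex_of_real (g x) * iexp (a * Z x)) = c * char (distr M borel Z) a"
    and A: "A \<in> sets borel"
  shows "expectation (\<lambda>x. g x * indicator A (Z x)) = c * prob (Z -` A \<inter> space M)"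
proof -
  define D where "D = density M (\<lambda>x. ennreal (g x / c))"
  define N where "N = distr D borel Z"
  have Dm[measurable]: "(\<lambda>x. g x / c) \<in> borel_measurable M" by measurable
  have sD: "sets D = sets M" "space D = space M" by (simp_all add: D_def)
  have "emeasure D (space D) = (\<integral>\<^sup>+x. ennreal (g x / c) \<partial>M)"
    by (simp add: D_def emeasure_density nn_integral_restrict_space[symmetric])
  also have "\<dots> = ennreal (expectation (\<lambda>x. g x / c))"
    using gi gnn c by (intro nn_integral_eq_integral) auto
  also have "\<dots> = 1" using c by simp
  finally have pD: "prob_space D" by (intro prob_spaceI) simp
  have ZmD: "Z \<in> borel_measurable D" by (simp add: D_def)
  have rN: "real_distribution N"
    unfolding N_def real_distribution_def real_distribution_axioms_def
    using prob_space.prob_space_distr[OF pD ZmD] by simp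
  have rZ: "real_distribution (distr M borel Z)" by (rule real_distribution_distr) simp
  have "char N a = char (distr M borel Z) a" for a
  proof -
    have Zm': "Z \<in> borel_measurable D" by (rule ZmD)
    have "char N a = (CLINT x|D. iexp (a * Z x))"
      unfolding N_def char_def by (subst integral_distr[OF Zm']) auto
    also have "\<dots> = (CLINT x|M. (g x / c) *\<^sub>R iexp (a * Z x))"
      unfolding D_def by (rule integral_density) (use gnn c in auto)
    also have "\<dots> = (CLINT x|M. complex_of_real (g x) * iexp (a * Z x)) / c"
      by (simp add: scaleR_conv_of_real field_simps)
    also have "\<dots> = char (distr M borel Z) a" using c ch[of a] by simp
    finally show ?thesis .
  qed
  then have NZ: "N = distr M borel Z"
    by (intro Levy_uniqueness rN rZ) auto
  have "measure N A = prob (Z -` A \<inter> space M)"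
    unfolding NZ using A by (simp add: measure_distr)
  moreover have "measure N A = (LINT x|D. indicator A (Z x))"
  proof -
    have Zm': "Z \<in> borel_measurable D" by (rule ZmD)
    have "measure N A = (LINT x|N. indicator A x)"
      using A by (simp add: N_def)
    also have "\<dots> = (LINT x|D. indicator A (Z x))"
      unfolding N_def by (subst integral_distr[OF Zm']) (use A in auto)
    finally show ?thesis .
  qed
  moreover have "(LINT x|D. indicator A (Z x)) = (LINT x|M. (g x / c) * indicator A (Z x))"
    unfolding D_def by (subst integral_density) (use gnn c A in auto)
  ultimately show ?thesis using c by (simp add: field_simps)
qed



lemma iexp_cos_id: "complex_of_real (1 + cos y) * iexp x = iexp x + (iexp (x + y) + iexp (x + - y)) / 2"
  by (simp add: Re_exp Im_exp complex_eq_iff cos_add sin_add cos_diff sin_diff field_simps)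

lemma iexp_sin_id: "complex_of_real (1 + sin y) * iexp x = iexp x - \<i> * (iexp (x + y) - iexp (x + - y)) / 2"
  by (simp add: Re_exp Im_exp complex_eq_iff cos_add sin_add cos_diff sin_diff field_simps)

lemma iexp_split: "complex_of_real u * iexp y = complex_of_real (u * cos y) + \<i> * complex_of_real (u * sin y)"
  by (simp add: Re_exp Im_exp complex_eq_iff)

lemma (in prob_space) integrable_iexp_comp:
  "f \<in> borel_measurable M \<Longrightarrow> integrable M (\<lambda>x. iexp (f x))"
  by (intro integrable_const_bound[where B=1]) auto

lemma (in prob_space) exp_ind:
  assumes "A \<in> sets borel" "X \<in> borel_measurable M"
  shows "expectation (\<lambda>x. indicator A (X x)) = prob (X -` A \<inter> space M)"
proof -
  have "expectation (\<lambda>x. indicator A (X x)) = expectation (indicator (X -` A \<inter> space M) :: _ \<Rightarrow> real)"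
    by (rule Bochner_Integration.integral_cong[OF refl]) (auto split: split_indicator)
  also have "\<dots> = prob (X -` A \<inter> space M)" by simp
  finally show ?thesis .
qed

lemma (in prob_space) int3c:
  assumes [measurable]: "f \<in> borel_measurable M" "g \<in> borel_measurable M" "h \<in> borel_measurable M"
  shows "(CLINT x|M. iexp (f x) + (iexp (g x) + iexp (h x)) / 2) = (CLINT x|M. iexp (f x)) + ((CLINT x|M. iexp (g x)) + (CLINT x|M. iexp (h x))) / 2"
proof -
  have i: "integrable M (\<lambda>x. iexp (f x))" "integrable M (\<lambda>x. iexp (g x))" "integrable M (\<lambda>x. iexp (h x))"
    by (simp_all add: integrable_iexp_comp)
  have i2: "integrable M (\<lambda>x. (iexp (g x) + iexp (h x)) / 2)"
    using i by (intro integrable_divide Bochner_Integration.integrable_add)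
  show ?thesis
    by (simp only: Bochner_Integration.integral_add[OF i(1) i2] integral_divide_zero Bochner_Integration.integral_add[OF i(2) i(3)])
qed

lemma (in prob_space) int3s:
  assumes [measurable]: "f \<in> borel_measurable M" "g \<in> borel_measurable M" "h \<in> borel_measurable M"
  shows "(CLINT x|M. iexp (f x) - \<i> * (iexp (g x) - iexp (h x)) / 2) = (CLINT x|M. iexp (f x)) - \<i> * ((CLINT x|M. iexp (g x)) - (CLINT x|M. iexp (h x))) / 2"
proof -
  have i: "integrable M (\<lambda>x. iexp (f x))" "integrable M (\<lambda>x. iexp (g x))" "integrable M (\<lambda>x. iexp (h x))"
    by (simp_all add: integrable_iexp_comp)
  have i2: "integrable M (\<lambda>x. \<i> * (iexp (g x) - iexp (h x)) / 2)"
    using i by (intro integrable_divide integrable_mult_right Bochner_Integration.integrable_diff)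
  show ?thesis
    by (simp only: Bochner_Integration.integral_diff[OF i(1) i2] integral_divide_zero integral_mult_right_zero Bochner_Integration.integral_diff[OF i(2) i(3)])
qed

lemma (in prob_space) indep_from_char:
  fixes X W :: "'a \<Rightarrow> real" and \<alpha> \<beta> :: real
  assumes Xm[measurable]: "X \<in> borel_measurable M" and Wm[measurable]: "W \<in> borel_measurable M"
    and ch: "\<And>a b. (CLINT x|M. iexp (a * X x + b * W x)) = complex_of_real (exp (- (\<alpha> * a^2 + \<beta> * b^2) / 2))"
  shows "indep_var borel X borel W"
proof -
  define \<phi> where "\<phi> b = exp (- (\<beta> * b^2) / 2)" for b
  define \<psi> where "\<psi> a = exp (- (\<alpha> * a^2) / 2)" for a
  have chX: "char (distr M borel X) a = complex_of_real (\<psi> a)" for a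
    using ch[of a 0] by (simp add: char_def integral_distr \<psi>_def)
  have chW: "char (distr M borel W) b = complex_of_real (\<phi> b)" for b
    using ch[of 0 b] by (simp add: char_def integral_distr \<phi>_def)
  have ch2: "(CLINT x|M. iexp (a * X x + b * W x)) = complex_of_real (\<psi> a * \<phi> b)" for a b
  proof -
    have e: "\<psi> a * \<phi> b = exp (- (\<alpha> * a^2 + \<beta> * b^2) / 2)"
      unfolding \<psi>_def \<phi>_def by (simp add: exp_add[symmetric] field_simps)
    show ?thesis by (subst e) (rule ch)
  qed
  have ch3: "(CLINT x|M. iexp (a * X x + - (b * W x))) = complex_of_real (\<psi> a * \<phi> b)" for a b
    using ch2[of a "-b"] by (simp add: \<phi>_def)
  have iX: "(CLINT x|M. iexp (a * X x)) = complex_of_real (\<psi> a)" for a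
    using chX[of a] by (simp add: char_def integral_distr)
  have iW: "(CLINT x|M. iexp (b * W x)) = complex_of_real (\<phi> b)" for b
    using ch2[of 0 b] by (simp add: \<psi>_def)
  have Ecos: "expectation (\<lambda>x. cos (b * W x)) = \<phi> b" for b
  proof -
    have "expectation (\<lambda>x. Re (iexp (b * W x))) = Re (CLINT x|M. iexp (b * W x))"
      by (rule integral_Re) (rule integrable_iexp_comp, simp)
    then show ?thesis by (simp only: iW) (simp add: Re_exp)
  qed
  have Esin: "expectation (\<lambda>x. sin (b * W x)) = 0" for b
  proof -
    have "expectation (\<lambda>x. Im (iexp (b * W x))) = Im (CLINT x|M. iexp (b * W x))"
      by (rule integral_Im) (rule integrable_iexp_comp, simp)
    then show ?thesis by (simp only: iW) (simp add: Im_exp)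
  qed
  have intc: "integrable M (\<lambda>x. cos (b * W x))" for b
    by (intro integrable_const_bound[where B=1]) auto
  have ints: "integrable M (\<lambda>x. sin (b * W x))" for b
    by (intro integrable_const_bound[where B=1]) auto
  have \<phi>pos: "\<phi> b > 0" for b by (simp add: \<phi>_def)
  have cosA: "expectation (\<lambda>x. indicator A (X x) * cos (b * W x)) = \<phi> b * prob (X -` A \<inter> space M)"
    if A: "A \<in> sets borel" for A b
  proof -
    have "expectation (\<lambda>x. (1 + cos (b * W x)) * indicator A (X x)) = (1 + \<phi> b) * prob (X -` A \<inter> space M)"
    proof (rule weighted_levy[OF Xm _ _ _ _ _ _ A])
      show "integrable M (\<lambda>x. 1 + cos (b * W x))" using intc by auto
      show "expectation (\<lambda>x. 1 + cos (b * W x)) = 1 + \<phi> b"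
        using intc by (simp add: Ecos prob_space)
      show "0 < 1 + \<phi> b" using \<phi>pos[of b] by simp
      show "(CLINT x|M. complex_of_real (1 + cos (b * W x)) * iexp (a * X x)) = complex_of_real (1 + \<phi> b) * char (distr M borel X) a" for a
      proof -
        have "(CLINT x|M. complex_of_real (1 + cos (b * W x)) * iexp (a * X x))
          = (CLINT x|M. iexp (a * X x) + (iexp (a * X x + b * W x) + iexp (a * X x + - (b * W x))) / 2)"
          by (simp only: iexp_cos_id)
        also have "\<dots> = (CLINT x|M. iexp (a * X x)) + ((CLINT x|M. iexp (a * X x + b * W x)) + (CLINT x|M. iexp (a * X x + - (b * W x)))) / 2"
          by (rule int3c) simp_all
        also have "\<dots> = complex_of_real (\<psi> a) + (complex_of_real (\<psi> a * \<phi> b) + complex_of_real (\<psi> a * \<phi> b)) / 2"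
          by (simp only: iX ch2 ch3)
        also have "\<dots> = complex_of_real (1 + \<phi> b) * char (distr M borel X) a"
          by (simp add: chX field_simps)
        finally show ?thesis .
      qed
    qed (auto, smt (verit) cos_ge_minus_one)
    moreover have "expectation (\<lambda>x. (1 + cos (b * W x)) * indicator A (X x))
        = expectation (\<lambda>x. indicator A (X x)) + expectation (\<lambda>x. indicator A (X x) * cos (b * W x))"
    proof -
      have i1: "integrable M (\<lambda>x. indicator A (X x) :: real)"
        by (intro integrable_const_bound[where B=1]) (use A in auto)
      have i2: "integrable M (\<lambda>x. indicator A (X x) * cos (b * W x))"
        by (intro integrable_const_bound[where B=1]) (use A in \<open>auto simp: abs_mult split: split_indicator\<close>)
      have "expectation (\<lambda>x. (1 + cos (b * W x)) * indicator A (X x))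
          = expectation (\<lambda>x. indicator A (X x) + indicator A (X x) * cos (b * W x))"
        by (simp add: field_simps)
      also have "\<dots> = expectation (\<lambda>x. indicator A (X x)) + expectation (\<lambda>x. indicator A (X x) * cos (b * W x))"
        by (rule Bochner_Integration.integral_add[OF i1 i2])
      finally show ?thesis .
    qed
    ultimately show ?thesis using exp_ind[OF A Xm] by (simp add: field_simps)
  qed
  have sinA: "expectation (\<lambda>x. indicator A (X x) * sin (b * W x)) = 0"
    if A: "A \<in> sets borel" for A b
  proof -
    have "expectation (\<lambda>x. (1 + sin (b * W x)) * indicator A (X x)) = 1 * prob (X -` A \<inter> space M)"
    proof (rule weighted_levy[OF Xm _ _ _ _ _ _ A])
      show "integrable M (\<lambda>x. 1 + sin (b * W x))" using ints by auto
      show "expectation (\<lambda>x. 1 + sin (b * W x)) = 1"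
        using ints by (simp add: Esin prob_space)
      show "(CLINT x|M. complex_of_real (1 + sin (b * W x)) * iexp (a * X x)) = complex_of_real 1 * char (distr M borel X) a" for a
      proof -
        have "(CLINT x|M. complex_of_real (1 + sin (b * W x)) * iexp (a * X x))
          = (CLINT x|M. iexp (a * X x) - \<i> * (iexp (a * X x + b * W x) - iexp (a * X x + - (b * W x))) / 2)"
          by (simp only: iexp_sin_id)
        also have "\<dots> = (CLINT x|M. iexp (a * X x)) - \<i> * ((CLINT x|M. iexp (a * X x + b * W x)) - (CLINT x|M. iexp (a * X x + - (b * W x)))) / 2"
          by (rule int3s) simp_all
        also have "\<dots> = complex_of_real (\<psi> a)"
          by (simp only: iX ch2 ch3) simp
        also have "\<dots> = complex_of_real 1 * char (distr M borel X) a"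
          by (simp add: chX)
        finally show ?thesis .
      qed
    qed (auto, smt (verit) sin_ge_minus_one)
    moreover have "expectation (\<lambda>x. (1 + sin (b * W x)) * indicator A (X x))
        = expectation (\<lambda>x. indicator A (X x)) + expectation (\<lambda>x. indicator A (X x) * sin (b * W x))"
    proof -
      have i1: "integrable M (\<lambda>x. indicator A (X x) :: real)"
        by (intro integrable_const_bound[where B=1]) (use A in auto)
      have i2: "integrable M (\<lambda>x. indicator A (X x) * sin (b * W x))"
        by (intro integrable_const_bound[where B=1]) (use A in \<open>auto simp: abs_mult split: split_indicator\<close>)
      have "expectation (\<lambda>x. (1 + sin (b * W x)) * indicator A (X x))
          = expectation (\<lambda>x. indicator A (X x) + indicator A (X x) * sin (b * W x))"
        by (simp add: field_simps)
      also have "\<dots> = expectation (\<lambda>x. indicator A (X x)) + expectation (\<lambda>x. indicator A (X x) * sin (b * W x))"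
        by (rule Bochner_Integration.integral_add[OF i1 i2])
      finally show ?thesis .
    qed
    ultimately show ?thesis using exp_ind[OF A Xm] by (simp add: field_simps)
  qed
  have rect: "prob (X -` A \<inter> W -` B \<inter> space M) = prob (X -` A \<inter> space M) * prob (W -` B \<inter> space M)"
    if A: "A \<in> sets borel" and B: "B \<in> sets borel" for A B
  proof (cases "prob (X -` A \<inter> space M) = 0")
    case True
    have "prob (X -` A \<inter> W -` B \<inter> space M) \<le> prob (X -` A \<inter> space M)"
      using A B by (intro finite_measure_mono) auto
    then show ?thesis using True measure_nonneg[of M "X -` A \<inter> W -` B \<inter> space M"] by simp
  next
    case False
    then have pos: "prob (X -` A \<inter> space M) > 0" using measure_nonneg[of M "X -` A \<inter> space M"] by linarith
    have "expectation (\<lambda>x. indicator A (X x) * indicator B (W x)) = prob (X -` A \<inter> space M) * prob (W -` B \<inter> space M)"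
    proof (rule weighted_levy[OF Wm _ _ _ _ pos _ B])
      show "integrable M (\<lambda>x. indicator A (X x) :: real)"
        by (intro integrable_const_bound[where B=1]) (use A in auto)
      show "expectation (\<lambda>x. indicator A (X x)) = prob (X -` A \<inter> space M)" by (rule exp_ind[OF A Xm])
      show "(CLINT x|M. complex_of_real (indicator A (X x)) * iexp (b * W x)) = complex_of_real (prob (X -` A \<inter> space M)) * char (distr M borel W) b" for b
      proof -
        have "(CLINT x|M. complex_of_real (indicator A (X x)) * iexp (b * W x))
          = (CLINT x|M. complex_of_real (indicator A (X x) * cos (b * W x)) + \<i> * complex_of_real (indicator A (X x) * sin (b * W x)))"
          by (simp only: iexp_split)
        also have "\<dots> = complex_of_real (expectation (\<lambda>x. indicator A (X x) * cos (b * W x))) + \<i> * complex_of_real (expectation (\<lambda>x. indicator A (X x) * sin (b * W x)))"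
        proof -
          have i2: "integrable M (\<lambda>x. indicator A (X x) * cos (b * W x))"
            by (intro integrable_const_bound[where B=1]) (use A in \<open>auto simp: abs_mult split: split_indicator\<close>)
          have i3: "integrable M (\<lambda>x. indicator A (X x) * sin (b * W x))"
            by (intro integrable_const_bound[where B=1]) (use A in \<open>auto simp: abs_mult split: split_indicator\<close>)
          have j2: "integrable M (\<lambda>x. complex_of_real (indicator A (X x) * cos (b * W x)))"
            by (rule integrable_of_real[OF i2])
          have j3: "integrable M (\<lambda>x. \<i> * complex_of_real (indicator A (X x) * sin (b * W x)))"
            by (intro integrable_mult_right integrable_of_real[OF i3])
          show ?thesis
            by (simp only: Bochner_Integration.integral_add[OF j2 j3] integral_mult_right_zero integral_complex_of_real)
        qed
        also have "\<dots> = complex_of_real (prob (X -` A \<inter> space M)) * char (distr M borel W) b"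
          by (simp add: cosA[OF A] sinA[OF A] chW)
        finally show ?thesis .
      qed
    qed (use A in auto)
    moreover have "expectation (\<lambda>x. indicator A (X x) * indicator B (W x)) = prob (X -` A \<inter> W -` B \<inter> space M)"
    proof -
      have "expectation (\<lambda>x. indicator A (X x) * indicator B (W x)) = expectation (indicator (X -` A \<inter> W -` B \<inter> space M) :: _ \<Rightarrow> real)"
        by (rule Bochner_Integration.integral_cong[OF refl]) (auto split: split_indicator)
      also have "\<dots> = prob (X -` A \<inter> W -` B \<inter> space M)"
        using A B by simp
      finally show ?thesis .
    qed
    ultimately show ?thesis by simp
  qed
  show ?thesis
    unfolding indep_var_distribution_eq
  proof (intro conjI)
    show "random_variable borel X" "random_variable borel W" by simp_all
    show "distr M borel X \<Otimes>\<^sub>M distr M borel W = distr M (borel \<Otimes>\<^sub>M borel) (\<lambda>x. (X x, W x))"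
    proof (rule pair_measure_eqI)
      show "sigma_finite_measure (distr M borel X)"
        by (intro prob_space_imp_sigma_finite prob_space_distr) simp
      show "sigma_finite_measure (distr M borel W)"
        by (intro prob_space_imp_sigma_finite prob_space_distr) simp
      show "sets (distr M borel X \<Otimes>\<^sub>M distr M borel W) = sets (distr M (borel \<Otimes>\<^sub>M borel) (\<lambda>x. (X x, W x)))"
        by simp
      fix A B assume A: "A \<in> sets (distr M borel X)" and B: "B \<in> sets (distr M borel W)"
      then have A': "A \<in> sets borel" and B': "B \<in> sets borel" by simp_all
      have "(\<lambda>x. (X x, W x)) -` (A \<times> B) \<inter> space M = X -` A \<inter> W -` B \<inter> space M" by auto
      then show "emeasure (distr M borel X) A * emeasure (distr M borel W) B = emeasure (distr M (borel \<Otimes>\<^sub>M borel) (\<lambda>x. (X x, W x))) (A \<times> B)"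
        using A' B' by (simp add: emeasure_distr emeasure_eq_measure rect ennreal_mult'[symmetric] measure_nonneg)
    qed
  qed
qed



lemma (in prob_space) prod_int:
  fixes F G :: "'a \<Rightarrow> real"
  assumes [measurable]: "F \<in> borel_measurable M" "G \<in> borel_measurable M"
    and "integrable M (\<lambda>x. (F x)^2)" "integrable M (\<lambda>x. (G x)^2)"
  shows "integrable M (\<lambda>x. F x * G x)"
proof (rule Bochner_Integration.integrable_bound[where f="\<lambda>x. (F x)^2 + (G x)^2"])
  show "integrable M (\<lambda>x. (F x)^2 + (G x)^2)" using assms by auto
  show "AE x in M. norm (F x * G x) \<le> norm ((F x)^2 + (G x)^2)"
  proof (intro AE_I2)
    fix x
    have "0 \<le> (\<bar>F x\<bar> - \<bar>G x\<bar>)^2" by simp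
    then have "2 * \<bar>F x * G x\<bar> \<le> (F x)^2 + (G x)^2" by (simp add: power2_eq_square algebra_simps abs_mult)
    then show "norm (F x * G x) \<le> norm ((F x)^2 + (G x)^2)" by simp
  qed
qed simp

locale isg =
  fixes M :: "'a measure" and X :: "real^2 \<Rightarrow> 'a \<Rightarrow> real" and \<rho> :: "real \<Rightarrow> real"
  assumes isg: "isotropic_standard_gaussian M X \<rho>"
begin

sublocale prob_space M using isg by (simp add: isotropic_standard_gaussian_def)

lemma gp: "gaussian_process M X" using isg by (simp add: isotropic_standard_gaussian_def)

lemma Xm[measurable]: "X s \<in> borel_measurable M" using gp by (simp add: gaussian_process_def)

lemma EX: "expectation (X s) = 0" using isg by (simp add: isotropic_standard_gaussian_def)

lemma EX2: "expectation (\<lambda>w. (X s w)^2) = 1"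
  using isg by (simp add: isotropic_standard_gaussian_def EX)

lemma X2: "integrable M (\<lambda>w. (X s w)^2)"
  using EX2[of s] not_integrable_integral_eq by fastforce

lemma Xi: "integrable M (X s)"
  by (rule square_integrable_imp_integrable[OF Xm X2])

lemma EXY: "expectation (\<lambda>w. X s w * X t w) = \<rho> (norm (s - t))"
  using isg by (simp add: isotropic_standard_gaussian_def EX)

lemma XYi: "integrable M (\<lambda>w. X s w * X t w)"
  by (rule prod_int[OF Xm Xm X2 X2])

lemma gauss_comb:
  fixes S :: "(real^2) set" and c :: "real^2 \<Rightarrow> real"
  assumes "finite S"
  shows "\<exists>m v. v \<ge> 0 \<and> (\<forall>t. char (distr M borel (\<lambda>w. \<Sum>s\<in>S. c s * X s w)) t
                 = exp (\<i> * complex_of_real (t * m) - complex_of_real (v * t^2 / 2)))"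
  using gp assms unfolding gaussian_process_def by blast

lemma char2:
  assumes "s \<noteq> t"
  shows "(CLINT w|M. iexp (a * X s w + b * X t w)) = complex_of_real (exp (- (a^2 + 2*a*b*\<rho> (norm (s - t)) + b^2) / 2))"
proof -
  define Z where "Z w = a * X s w + b * X t w" for w
  define c where "c x = (if x = s then a else b)" for x
  have Zs: "(\<lambda>w. \<Sum>x\<in>{s,t}. c x * X x w) = Z"
    using assms by (auto simp: Z_def c_def)
  obtain m v where ch: "\<And>\<tau>. char (distr M borel Z) \<tau> = exp (\<i> * complex_of_real (\<tau> * m) - complex_of_real (v * \<tau>^2 / 2))"
    using gauss_comb[of "{s,t}" c] Zs by auto
  have Zm[measurable]: "Z \<in> borel_measurable M" by (simp add: Z_def[abs_def])
  have Zsq: "(\<lambda>w. (Z w)^2) = (\<lambda>w. a^2 * (X s w)^2 + 2*a*b * (X s w * X t w) + b^2 * (X t w)^2)"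
    by (auto simp: Z_def power2_eq_square algebra_simps)
  have Z2: "integrable M (\<lambda>w. (Z w)^2)"
    unfolding Zsq using X2 XYi by auto
  have EZ: "expectation Z = 0"
    unfolding Z_def[abs_def] using Xi by (simp add: EX)
  have EZ2: "expectation (\<lambda>w. (Z w)^2) = a^2 + 2*a*b*\<rho> (norm (s - t)) + b^2"
    unfolding Zsq using X2 XYi by (simp add: EX2 EXY)
  from gauss_ident[OF Zm Z2 EZ ch] have "m = 0" "v = a^2 + 2*a*b*\<rho> (norm (s - t)) + b^2"
    by (simp_all add: EZ2)
  then have "char (distr M borel Z) 1 = complex_of_real (exp (- (a^2 + 2*a*b*\<rho> (norm (s - t)) + b^2) / 2))"
    by (simp add: ch exp_of_real[symmetric]) (rule arg_cong[where f=exp], simp add: algebra_simps diff_divide_distrib add_divide_distrib)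
  then show ?thesis by (simp add: char_def integral_distr Z_def)
qed

lemma char1:
  "char (distr M borel (X s)) a = complex_of_real (exp (- (a^2) / 2))"
proof -
  define c where "c x = (1::real)" for x :: "real^2"
  have Zs: "(\<lambda>w. \<Sum>x\<in>{s}. c x * X x w) = X s"
    by (auto simp: c_def)
  obtain m v where ch: "\<And>\<tau>. char (distr M borel (X s)) \<tau> = exp (\<i> * complex_of_real (\<tau> * m) - complex_of_real (v * \<tau>^2 / 2))"
    using gauss_comb[of "{s}" c] Zs by auto
  from gauss_ident[OF Xm X2 EX ch] have "m = 0" "v = 1"
    by (simp_all add: EX2)
  then show ?thesis by (simp add: ch exp_of_real[symmetric])
qed

lemma distr_eq: "distr M borel (X s) = distr M borel (X t)"
  by (intro Levy_uniqueness real_distribution_distr) (auto simp: char1)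

end



lemma fsq: "(u::real) \<ge> 0 \<Longrightarrow> (max 0 (x - u))^2 \<le> x^2"
  by (cases "x - u \<ge> 0") (auto simp: power_mono abs_le_square_iff max_def)

lemma abs_prod_le: fixes a b :: real shows "\<bar>a * b\<bar> \<le> (a^2 + b^2) / 2"
proof -
  have "0 \<le> (\<bar>a\<bar> - \<bar>b\<bar>)^2" by simp
  then have "0 \<le> a^2 - 2 * \<bar>a\<bar> * \<bar>b\<bar> + b^2" by (simp only: power2_diff power2_abs)
  then show ?thesis by (simp add: abs_mult)
qed

lemma (in prob_space) var_le:
  fixes F :: "'a \<Rightarrow> real"
  assumes [measurable]: "F \<in> borel_measurable M" and F2: "integrable M (\<lambda>x. (F x)^2)"
  shows "expectation (\<lambda>x. (F x - expectation F)^2) \<le> expectation (\<lambda>x. (F x)^2)"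
proof -
  have Fi: "integrable M F" by (rule square_integrable_imp_integrable[OF _ F2]) simp
  define c where "c = expectation F"
  have eq: "(\<lambda>x. (F x - c)^2) = (\<lambda>x. (F x)^2 - 2 * c * F x + c^2)"
    by (auto simp: power2_eq_square algebra_simps)
  have "expectation (\<lambda>x. (F x - c)^2) = expectation (\<lambda>x. (F x)^2) - 2 * c * c + c^2"
    unfolding eq using F2 Fi by (simp add: c_def prob_space)
  also have "\<dots> \<le> expectation (\<lambda>x. (F x)^2)" by (simp add: power2_eq_square)
  finally show ?thesis by (simp add: c_def)
qed

context isg
begin

lemma fXm[measurable]: "(\<lambda>w. max 0 (X s w - u)) \<in> borel_measurable M" by measurable

lemma fX_le: "u \<ge> 0 \<Longrightarrow> (max 0 (X s w - u))^2 \<le> (X s w)^2"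
  by (cases "X s w - u \<ge> 0") (auto simp: power_mono abs_le_square_iff max_def)

lemma fX2: assumes "u \<ge> 0" shows "integrable M (\<lambda>w. (max 0 (X s w - u))^2)"
  by (rule Bochner_Integration.integrable_bound[OF X2]) (use fX_le[OF assms] in auto)

lemma fXi: assumes "u \<ge> 0" shows "integrable M (\<lambda>w. max 0 (X s w - u))"
  by (rule square_integrable_imp_integrable[OF fXm fX2[OF assms]])

lemma EfX2: assumes "u \<ge> 0" shows "expectation (\<lambda>w. (max 0 (X s w - u))^2) \<le> 1"
proof -
  have "expectation (\<lambda>w. (max 0 (X s w - u))^2) \<le> expectation (\<lambda>w. (X s w)^2)"
    by (rule integral_mono[OF fX2[OF assms] X2]) (use fX_le[OF assms] in auto)
  then show ?thesis by (simp add: EX2)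
qed

lemma Ef_eq: "expectation (\<lambda>w. max 0 (X s w - u)) = expectation (\<lambda>w. max 0 (X t w - u))"
proof -
  have "expectation (\<lambda>w. max 0 (X s w - u)) = (LINT x|distr M borel (X s). max 0 (x - u))"
    by (subst integral_distr) auto
  also have "\<dots> = (LINT x|distr M borel (X t). max 0 (x - u))" by (simp only: distr_eq[of s t])
  also have "\<dots> = expectation (\<lambda>w. max 0 (X t w - u))"
    by (subst integral_distr) auto
  finally show ?thesis .
qed

lemma varU: assumes "u \<ge> 0"
  shows "expectation (\<lambda>w. (max 0 (X s w - u) - expectation (\<lambda>w. max 0 (X s w - u)))^2) \<le> 1"
  using var_le[OF fXm[of s u] fX2[OF assms, of s]] EfX2[OF assms, of s] by linarith

lemma cov_le1:
  fixes sa s t :: "real^2"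
  assumes "u \<ge> 0"
  defines "m \<equiv> expectation (\<lambda>w. max 0 (X sa w - u))"
  shows "\<bar>expectation (\<lambda>w. (max 0 (X s w - u) - m) * (max 0 (X t w - u) - m))\<bar> \<le> 1"
proof -
  let ?U = "\<lambda>w. max 0 (X s w - u) - m" and ?V = "\<lambda>w. max 0 (X t w - u) - m"
  have ms: "m = expectation (\<lambda>w. max 0 (X s w - u))" "m = expectation (\<lambda>w. max 0 (X t w - u))"
    unfolding m_def by (rule Ef_eq)+
  have U2: "integrable M (\<lambda>w. (?U w)^2)"
    unfolding power2_eq_square by (rule prod_int) (use fX2[OF assms(1)] fXi[OF assms(1)] in \<open>auto simp: power2_eq_square algebra_simps\<close>)
  have V2: "integrable M (\<lambda>w. (?V w)^2)"
    unfolding power2_eq_square by (rule prod_int) (use fX2[OF assms(1)] fXi[OF assms(1)] in \<open>auto simp: power2_eq_square algebra_simps\<close>)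
  have "\<bar>expectation (\<lambda>w. ?U w * ?V w)\<bar> \<le> expectation (\<lambda>w. \<bar>?U w * ?V w\<bar>)"
    by (rule integral_abs_bound)
  also have "\<dots> \<le> expectation (\<lambda>w. ((?U w)^2 + (?V w)^2) / 2)"
  proof (rule integral_mono)
    show "integrable M (\<lambda>w. \<bar>?U w * ?V w\<bar>)" by (intro integrable_abs prod_int U2 V2) auto
    show "integrable M (\<lambda>w. ((?U w)^2 + (?V w)^2) / 2)" using U2 V2 by auto
    fix w
    show "\<bar>?U w * ?V w\<bar> \<le> ((?U w)^2 + (?V w)^2) / 2" by (rule abs_prod_le)
  qed
  also have "\<dots> = (expectation (\<lambda>w. (?U w)^2) + expectation (\<lambda>w. (?V w)^2)) / 2"
    using U2 V2 by simp
  also have "\<dots> \<le> (1 + 1) / 2"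
    using varU[OF assms(1), of s] varU[OF assms(1), of t] ms by (intro divide_right_mono add_mono) simp_all
  finally show ?thesis by simp
qed

lemma cov_rho:
  fixes sa s t :: "real^2"
  assumes u: "u \<ge> 0" and st: "s \<noteq> t"
  defines "m \<equiv> expectation (\<lambda>w. max 0 (X sa w - u))"
  shows "\<bar>expectation (\<lambda>w. (max 0 (X s w - u) - m) * (max 0 (X t w - u) - m))\<bar> \<le> \<bar>\<rho> (norm (s - t))\<bar>"
proof -
  define r where "r = \<rho> (norm (s - t))"
  define f where "f x = max 0 (x - u)" for x
  define W where "W w = X t w - r * X s w" for w
  have fm[measurable]: "f \<in> borel_measurable borel" unfolding f_def by measurable
  have Wm[measurable]: "W \<in> borel_measurable M" unfolding W_def[abs_def] by measurable
  have ms: "m = expectation (\<lambda>w. f (X s w))" "m = expectation (\<lambda>w. f (X t w))"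
    unfolding m_def f_def by (rule Ef_eq)+
  have indep: "indep_var borel (X s) borel W"
  proof (rule indep_from_char[where \<alpha>=1 and \<beta>="1 - r^2"])
    fix a b :: real
    have "(CLINT x|M. iexp (a * X s x + b * W x)) = (CLINT x|M. iexp ((a - b * r) * X s x + b * X t x))"
      by (rule Bochner_Integration.integral_cong[OF refl]) (simp add: W_def algebra_simps)
    also have "\<dots> = complex_of_real (exp (- ((a - b * r)^2 + 2*(a - b * r)*b*r + b^2) / 2))"
      unfolding r_def by (rule char2[OF st])
    also have "(a - b * r)^2 + 2*(a - b * r)*b*r + b^2 = 1 * a^2 + (1 - r^2) * b^2"
      by (simp add: power2_eq_square algebra_simps)
    finally show "(CLINT x|M. iexp (a * X s x + b * W x)) = complex_of_real (exp (- (1 * a^2 + (1 - r^2) * b^2) / 2))" .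
  qed simp_all
  have W2: "integrable M (\<lambda>w. (W w)^2)"
  proof -
    have "(\<lambda>w. (W w)^2) = (\<lambda>w. (X t w)^2 - 2 * r * (X s w * X t w) + r^2 * (X s w)^2)"
      by (auto simp: W_def power2_eq_square algebra_simps)
    then show ?thesis using X2 XYi by auto
  qed
  have fW2: "integrable M (\<lambda>w. (f (W w))^2)"
    by (rule Bochner_Integration.integrable_bound[OF W2]) (use fsq[OF u] in \<open>auto simp: f_def\<close>)
  have fWi: "integrable M (\<lambda>w. f (W w))"
    by (rule square_integrable_imp_integrable[OF _ fW2]) simp
  define U where "U w = f (X s w) - m" for w
  have Um[measurable]: "U \<in> borel_measurable M" unfolding U_def[abs_def] by measurable
  have fXs2: "integrable M (\<lambda>w. (f (X s w))^2)" using fX2[OF u] by (simp add: f_def)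
  have fXt2: "integrable M (\<lambda>w. (f (X t w))^2)" using fX2[OF u] by (simp add: f_def)
  have fXsi: "integrable M (\<lambda>w. f (X s w))" using fXi[OF u] by (simp add: f_def)
  have U2: "integrable M (\<lambda>w. (U w)^2)"
    unfolding power2_eq_square by (rule prod_int) (use fXs2 fXsi in \<open>auto simp: U_def power2_eq_square algebra_simps\<close>)
  have Ui: "integrable M U" by (rule square_integrable_imp_integrable[OF Um U2])
  have EU: "expectation U = 0" using fXsi ms unfolding U_def[abs_def] by (simp add: prob_space)
  have EU2: "expectation (\<lambda>w. (U w)^2) \<le> 1"
    using varU[OF u, of s] ms by (simp add: U_def f_def)
  define D where "D w = f (X t w) - f (W w)" for w
  have Dm[measurable]: "D \<in> borel_measurable M" unfolding D_def[abs_def] by measurable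
  have Dle: "\<bar>D w\<bar> \<le> \<bar>r\<bar> * \<bar>X s w\<bar>" for w
  proof -
    have "\<bar>f (X t w) - f (W w)\<bar> \<le> \<bar>X t w - W w\<bar>" unfolding f_def by (simp add: abs_le_iff max_def, linarith)
    also have "X t w - W w = r * X s w" by (simp add: W_def)
    finally show ?thesis by (simp add: D_def abs_mult)
  qed
  have D2: "integrable M (\<lambda>w. (D w)^2)"
  proof (rule Bochner_Integration.integrable_bound[OF integrable_mult_right[OF X2, of "r^2" s]])
    show "AE w in M. norm ((D w)^2) \<le> norm (r^2 * (X s w)^2)"
    proof (intro AE_I2)
      fix w
      have "\<bar>D w\<bar> \<le> \<bar>r * X s w\<bar>" using Dle[of w] by (simp add: abs_mult)
      then have "(D w)^2 \<le> (r * X s w)^2" by (simp only: abs_le_square_iff)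
      then show "norm ((D w)^2) \<le> norm (r^2 * (X s w)^2)" by (simp add: power_mult_distrib)
    qed
  qed simp
  have eq: "(\<lambda>w. (f (X s w) - m) * (f (X t w) - m)) = (\<lambda>w. U w * D w + U w * f (W w) - m * U w)"
    by (auto simp: U_def D_def algebra_simps)
  have iUD: "integrable M (\<lambda>w. U w * D w)" by (rule prod_int[OF Um Dm U2 D2])
  have indep2: "indep_var borel U borel (\<lambda>w. f (W w))"
    using indep_var_compose[OF indep, of "\<lambda>x. f x - m" borel f borel] by (simp add: comp_def U_def[abs_def])
  have EUfW: "expectation (\<lambda>w. U w * f (W w)) = 0"
    using indep_var_lebesgue_integral[OF indep2 Ui fWi] EU by simp
  have iUfW: "integrable M (\<lambda>w. U w * f (W w))"
    by (rule indep_var_integrable[OF indep2 Ui fWi])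
  have "expectation (\<lambda>w. (f (X s w) - m) * (f (X t w) - m)) = expectation (\<lambda>w. U w * D w)"
    unfolding eq using iUD iUfW Ui by (simp add: EUfW EU)
  then have "\<bar>expectation (\<lambda>w. (f (X s w) - m) * (f (X t w) - m))\<bar> \<le> expectation (\<lambda>w. \<bar>U w * D w\<bar>)"
    by (simp add: integral_abs_bound)
  also have "\<dots> \<le> expectation (\<lambda>w. \<bar>r\<bar> * (((U w)^2 + (X s w)^2) / 2))"
  proof (rule integral_mono)
    show "integrable M (\<lambda>w. \<bar>U w * D w\<bar>)" using iUD by auto
    show "integrable M (\<lambda>w. \<bar>r\<bar> * (((U w)^2 + (X s w)^2) / 2))" using U2 X2 by auto
    fix w
    have "\<bar>U w * D w\<bar> \<le> \<bar>U w\<bar> * (\<bar>r\<bar> * \<bar>X s w\<bar>)"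
      unfolding abs_mult by (intro mult_left_mono Dle) simp
    also have "\<dots> = \<bar>r\<bar> * \<bar>U w * X s w\<bar>" by (simp add: abs_mult)
    also have "\<dots> \<le> \<bar>r\<bar> * (((U w)^2 + (X s w)^2) / 2)"
      by (intro mult_left_mono abs_prod_le) simp
    finally show "\<bar>U w * D w\<bar> \<le> \<bar>r\<bar> * (((U w)^2 + (X s w)^2) / 2)" .
  qed
  also have "\<dots> = \<bar>r\<bar> * ((expectation (\<lambda>w. (U w)^2) + expectation (\<lambda>w. (X s w)^2)) / 2)"
    using U2 X2 by simp
  also have "\<dots> \<le> \<bar>r\<bar> * ((1 + 1) / 2)"
    using EU2 by (intro mult_left_mono divide_right_mono add_mono) (simp_all add: EX2)
  finally show ?thesis by (simp add: f_def r_def)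
qed

end



lemma (in prob_space) var_shift_le:
  fixes Y :: "'a \<Rightarrow> real"
  assumes [measurable]: "Y \<in> borel_measurable M" and Y2: "integrable M (\<lambda>x. (Y x - m)^2)"
  shows "variance Y \<le> expectation (\<lambda>x. (Y x - m)^2)"
proof -
  have Ym: "(\<lambda>x. Y x - m) \<in> borel_measurable M" by simp
  have i1: "integrable M (\<lambda>x. Y x - m)" by (rule square_integrable_imp_integrable[OF Ym Y2])
  have Yi: "integrable M Y"
  proof -
    have "integrable M (\<lambda>x. (Y x - m) + m)"
      by (rule Bochner_Integration.integrable_add[OF i1]) simp
    moreover have "(\<lambda>x. (Y x - m) + m) = Y" by auto
    ultimately show ?thesis by metis
  qed
  define c where "c = expectation Y"
  have eq: "(\<lambda>x. (Y x - c)^2) = (\<lambda>x. (Y x - m)^2 + 2 * (m - c) * (Y x - m) + (m - c)^2)"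
    by (auto simp: power2_eq_square algebra_simps)
  have "expectation (\<lambda>x. (Y x - c)^2) = expectation (\<lambda>x. (Y x - m)^2) + 2 * (m - c) * (c - m) + (m - c)^2"
    unfolding eq using Y2 i1 Yi by (simp add: prob_space c_def)
  also have "\<dots> \<le> expectation (\<lambda>x. (Y x - m)^2)"
  proof -
    have "0 \<le> (c - m)^2" by simp
    then show ?thesis by (simp add: power2_eq_square algebra_simps)
  qed
  finally show ?thesis by (simp add: c_def)
qed

lemma (in pair_sigma_finite) integrable_pair_bound:
  fixes f :: "_ \<Rightarrow> real"
  assumes f[measurable]: "f \<in> borel_measurable (M1 \<Otimes>\<^sub>M M2)" and w: "integrable M2 w"
    and fint: "\<And>y. y \<in> space M2 \<Longrightarrow> integrable M1 (\<lambda>x. f (x, y))"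
    and fle: "\<And>y. y \<in> space M2 \<Longrightarrow> (\<integral>x. \<bar>f (x, y)\<bar> \<partial>M1) \<le> w y"
  shows "integrable (M1 \<Otimes>\<^sub>M M2) f"
proof (rule integrableI_bounded[OF f])
  have "(\<integral>\<^sup>+ p. ennreal (norm (f p)) \<partial>(M1 \<Otimes>\<^sub>M M2)) = (\<integral>\<^sup>+ y. (\<integral>\<^sup>+ x. ennreal (norm (f (x, y))) \<partial>M1) \<partial>M2)"
    by (rule nn_integral_snd[symmetric]) simp
  also have "\<dots> \<le> (\<integral>\<^sup>+ y. ennreal (norm (w y)) \<partial>M2)"
  proof (rule nn_integral_mono)
    fix y assume y: "y \<in> space M2"
    have "(\<integral>\<^sup>+ x. ennreal (norm (f (x, y))) \<partial>M1) = ennreal (\<integral>x. \<bar>f (x, y)\<bar> \<partial>M1)"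
      using fint[OF y] by (simp add: nn_integral_eq_integral)
    also have "\<dots> \<le> ennreal (norm (w y))"
      using fle[OF y] by (intro ennreal_leI) simp
    finally show "(\<integral>\<^sup>+ x. ennreal (norm (f (x, y))) \<partial>M1) \<le> ennreal (norm (w y))" .
  qed
  also have "\<dots> < \<infinity>" using integrable_iff_bounded[THEN iffD1, OF w] by simp
  finally show "(\<integral>\<^sup>+ p. ennreal (norm (f p)) \<partial>(M1 \<Otimes>\<^sub>M M2)) < \<infinity>" .
qed

lemma (in prob_space) var_avg_bound:
  fixes F :: "'a \<Rightarrow> 'b::euclidean_space \<Rightarrow> real" and B :: "'b set" and m K :: real
    and k :: "'b \<times> 'b \<Rightarrow> real"
  assumes Fm: "(\<lambda>p. F (fst p) (snd p)) \<in> borel_measurable (M \<Otimes>\<^sub>M lborel)"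
    and B[measurable]: "B \<in> sets lborel" and Bfin: "emeasure lborel B < \<infinity>"
    and Bpos: "measure lborel B > 0"
    and g2: "\<And>s. integrable M (\<lambda>\<omega>. (F \<omega> s - m)^2)"
    and g2le: "\<And>s. expectation (\<lambda>\<omega>. (F \<omega> s - m)^2) \<le> 1"
    and km[measurable]: "k \<in> borel_measurable (lborel \<Otimes>\<^sub>M lborel)" and kb: "\<And>p. \<bar>k p\<bar> \<le> K"
    and cov: "\<And>s t. s \<in> B \<Longrightarrow> t \<in> B \<Longrightarrow> expectation (\<lambda>\<omega>. (F \<omega> s - m) * (F \<omega> t - m)) \<le> k (s, t)"
  shows "variance (\<lambda>\<omega>. (1 / measure lborel B) * (LINT s:B|lborel. F \<omega> s))
     \<le> (1 / (measure lborel B)^2) * (\<integral>p. indicator (B \<times> B) p * k p \<partial>(lborel \<Otimes>\<^sub>M lborel))"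
proof -
  let ?L = "lborel :: 'b measure"
  interpret PP: pair_sigma_finite M ?L
    by (rule pair_sigma_finite.intro[OF prob_space_imp_sigma_finite[OF prob_space_axioms] lborel.sigma_finite_measure_axioms])
  interpret QQ: pair_sigma_finite M "?L \<Otimes>\<^sub>M ?L"
    by (rule pair_sigma_finite.intro[OF prob_space_imp_sigma_finite[OF prob_space_axioms] lborel_pair.sigma_finite_measure_axioms])
  define \<mu> where "\<mu> = measure ?L B"
  have \<mu>pos: "\<mu> > 0" using Bpos by (simp add: \<mu>_def)
  have eB: "emeasure ?L B = ennreal \<mu>" unfolding \<mu>_def using Bfin by (intro emeasure_eq_ennreal_measure) simp
  define g where "g \<omega> s = F \<omega> s - m" for \<omega> s
  define \<phi> where "\<phi> \<omega> s = indicator B s * g \<omega> s" for \<omega> s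
  have Fm1[measurable]: "(\<lambda>p. F (fst p) (fst (snd p))) \<in> borel_measurable (M \<Otimes>\<^sub>M (?L \<Otimes>\<^sub>M ?L))"
    using measurable_compose[OF _ Fm, where f="\<lambda>p. (fst p, fst (snd p))" and M="M \<Otimes>\<^sub>M (?L \<Otimes>\<^sub>M ?L)"] by simp
  have Fm2[measurable]: "(\<lambda>p. F (fst p) (snd (snd p))) \<in> borel_measurable (M \<Otimes>\<^sub>M (?L \<Otimes>\<^sub>M ?L))"
    using measurable_compose[OF _ Fm, where f="\<lambda>p. (fst p, snd (snd p))" and M="M \<Otimes>\<^sub>M (?L \<Otimes>\<^sub>M ?L)"] by simp
  have Fm0[measurable]: "(\<lambda>p. F (fst p) (snd p)) \<in> borel_measurable (M \<Otimes>\<^sub>M ?L)" by (rule Fm)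
  have Fs[measurable]: "(\<lambda>\<omega>. F \<omega> s) \<in> borel_measurable M" for s
    using measurable_compose[OF _ Fm, where f="\<lambda>\<omega>. (\<omega>, s)" and M=M] by simp
  define h where "h = (\<lambda>(\<omega>, st). \<phi> \<omega> (fst st) * \<phi> \<omega> (snd st))"
  have hm[measurable]: "h \<in> borel_measurable (M \<Otimes>\<^sub>M (?L \<Otimes>\<^sub>M ?L))"
    unfolding h_def \<phi>_def g_def by measurable
  have gm[measurable]: "(\<lambda>\<omega>. g \<omega> s) \<in> borel_measurable M" for s unfolding g_def by measurable
  have gi2: "integrable M (\<lambda>\<omega>. (g \<omega> s)^2)" for s using g2 by (simp add: g_def)
  have gi: "integrable M (\<lambda>\<omega>. g \<omega> s)" for s by (rule square_integrable_imp_integrable[OF gm gi2])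
  have ge2: "expectation (\<lambda>\<omega>. (g \<omega> s)^2) \<le> 1" for s using g2le by (simp add: g_def)
  have ge1: "expectation (\<lambda>\<omega>. \<bar>g \<omega> s\<bar>) \<le> 1" for s
  proof -
    have "expectation (\<lambda>\<omega>. \<bar>g \<omega> s\<bar>) \<le> expectation (\<lambda>\<omega>. (1 + (g \<omega> s)^2) / 2)"
    proof (rule integral_mono)
      show "integrable M (\<lambda>\<omega>. \<bar>g \<omega> s\<bar>)" using gi by auto
      show "integrable M (\<lambda>\<omega>. (1 + (g \<omega> s)^2) / 2)" using gi2 by auto
      fix \<omega> show "\<bar>g \<omega> s\<bar> \<le> (1 + (g \<omega> s)^2) / 2" using abs_prod_le[of 1 "g \<omega> s"] by simp
    qed
    also have "\<dots> = (1 + expectation (\<lambda>\<omega>. (g \<omega> s)^2)) / 2" using gi2 by (simp add: prob_space)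
    also have "\<dots> \<le> 1" using ge2[of s] by simp
    finally show ?thesis .
  qed
  have BB[measurable]: "B \<times> B \<in> sets (?L \<Otimes>\<^sub>M ?L)" using B by (intro pair_measureI) simp_all
  have eBB: "emeasure (?L \<Otimes>\<^sub>M ?L) (B \<times> B) = ennreal (\<mu> * \<mu>)"
    using lborel.emeasure_pair_measure_Times[OF B B] eB \<mu>pos by (simp add: ennreal_mult)
  have iBB: "integrable (?L \<Otimes>\<^sub>M ?L) (indicator (B \<times> B) :: _ \<Rightarrow> real)"
    using eBB by (intro integrable_real_indicator BB) simp
  have iB: "integrable ?L (indicator B :: _ \<Rightarrow> real)"
    using eB by (intro integrable_real_indicator B) simp
  define q where "q = (\<lambda>(\<omega>, st). indicator B (fst st) * indicator B (snd st) * (((g \<omega> (fst st))^2 + (g \<omega> (snd st))^2) / 2))"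
  have qm[measurable]: "q \<in> borel_measurable (M \<Otimes>\<^sub>M (?L \<Otimes>\<^sub>M ?L))"
    unfolding q_def g_def by measurable
  have qint: "integrable (M \<Otimes>\<^sub>M (?L \<Otimes>\<^sub>M ?L)) q"
  proof (rule QQ.integrable_pair_bound[OF qm iBB])
    fix st :: "'b \<times> 'b"
    obtain s t where st: "st = (s, t)" by (cases st)
    have i: "integrable M (\<lambda>\<omega>. indicator B s * indicator B t * (((g \<omega> s)^2 + (g \<omega> t)^2) / 2) :: real)"
      using gi2 by auto
    then show "integrable M (\<lambda>\<omega>. q (\<omega>, st))" by (simp add: q_def st)
    have "(\<integral>\<omega>. \<bar>q (\<omega>, st)\<bar> \<partial>M) = indicator B s * indicator B t * ((expectation (\<lambda>\<omega>. (g \<omega> s)^2) + expectation (\<lambda>\<omega>. (g \<omega> t)^2)) / 2)"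
      using gi2 by (simp add: q_def st abs_mult)
    also have "\<dots> \<le> indicator B s * indicator B t * ((1 + 1) / 2)"
      using ge2[of s] ge2[of t] by (intro mult_left_mono divide_right_mono add_mono) auto
    also have "\<dots> = indicator (B \<times> B) st" by (simp add: st indicator_times)
    finally show "(\<integral>\<omega>. \<bar>q (\<omega>, st)\<bar> \<partial>M) \<le> indicator (B \<times> B) st" .
  qed
  have hint: "integrable (M \<Otimes>\<^sub>M (?L \<Otimes>\<^sub>M ?L)) h"
  proof (rule Bochner_Integration.integrable_bound[OF qint hm])
    show "AE p in M \<Otimes>\<^sub>M (?L \<Otimes>\<^sub>M ?L). norm (h p) \<le> norm (q p)"
    proof (intro AE_I2)
      fix p :: "'a \<times> 'b \<times> 'b"
      obtain \<omega> s t where p: "p = (\<omega>, s, t)" by (cases p) auto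
      have "\<bar>g \<omega> s * g \<omega> t\<bar> \<le> ((g \<omega> s)^2 + (g \<omega> t)^2) / 2" by (rule abs_prod_le)
      then show "norm (h p) \<le> norm (q p)"
        by (simp add: h_def q_def \<phi>_def p abs_mult split: split_indicator)
    qed
  qed
  have \<phi>m[measurable]: "(\<lambda>p. \<phi> (fst p) (snd p)) \<in> borel_measurable (M \<Otimes>\<^sub>M ?L)"
    unfolding \<phi>_def g_def by measurable
  have \<phi>int: "integrable (M \<Otimes>\<^sub>M ?L) (\<lambda>p. \<phi> (fst p) (snd p))"
  proof (rule PP.integrable_pair_bound[OF \<phi>m iB])
    fix s :: 'b
    show "integrable M (\<lambda>\<omega>. \<phi> (fst (\<omega>, s)) (snd (\<omega>, s)))" using gi by (simp add: \<phi>_def)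
    have "(\<integral>\<omega>. \<bar>\<phi> (fst (\<omega>, s)) (snd (\<omega>, s))\<bar> \<partial>M) = indicator B s * expectation (\<lambda>\<omega>. \<bar>g \<omega> s\<bar>)"
      by (simp add: \<phi>_def abs_mult)
    also have "\<dots> \<le> indicator B s * 1" using ge1[of s] by (intro mult_left_mono) auto
    finally show "(\<integral>\<omega>. \<bar>\<phi> (fst (\<omega>, s)) (snd (\<omega>, s))\<bar> \<partial>M) \<le> indicator B s" by simp
  qed
  define G where "G \<omega> = (\<integral>s. \<phi> \<omega> s \<partial>?L)" for \<omega>
  have \<phi>m': "case_prod \<phi> \<in> borel_measurable (M \<Otimes>\<^sub>M ?L)" using \<phi>m by (simp add: split_beta')
  have Gm[measurable]: "G \<in> borel_measurable M"
    unfolding G_def by (rule lborel.borel_measurable_lebesgue_integral[OF \<phi>m'])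
  have hAE: "AE \<omega> in M. (\<integral>st. h (\<omega>, st) \<partial>(?L \<Otimes>\<^sub>M ?L)) = (G \<omega>)^2"
    using QQ.AE_integrable_fst'[OF hint]
  proof eventually_elim
    fix \<omega> assume i: "integrable (?L \<Otimes>\<^sub>M ?L) (\<lambda>st. h (\<omega>, st))"
    have "(\<integral>st. h (\<omega>, st) \<partial>(?L \<Otimes>\<^sub>M ?L)) = (\<integral>s. \<integral>t. h (\<omega>, (s, t)) \<partial>?L \<partial>?L)"
      using lborel_pair.integral_fst'[OF i] by simp
    also have "\<dots> = (\<integral>s. \<phi> \<omega> s * G \<omega> \<partial>?L)"
      by (simp add: h_def G_def)
    also have "\<dots> = G \<omega> * G \<omega>" by (simp add: G_def)
    finally show "(\<integral>st. h (\<omega>, st) \<partial>(?L \<Otimes>\<^sub>M ?L)) = (G \<omega>)^2" by (simp add: power2_eq_square)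
  qed
  have hM: "integrable M (\<lambda>\<omega>. \<integral>st. h (\<omega>, st) \<partial>(?L \<Otimes>\<^sub>M ?L))" by (rule QQ.integrable_fst'[OF hint])
  have G2i: "integrable M (\<lambda>\<omega>. (G \<omega>)^2)"
    by (rule integrable_cong_AE_imp[OF hM _ hAE]) simp
  have hint': "integrable (M \<Otimes>\<^sub>M (?L \<Otimes>\<^sub>M ?L)) (\<lambda>(\<omega>, st). \<phi> \<omega> (fst st) * \<phi> \<omega> (snd st))"
    using hint by (simp add: h_def)
  have EG2: "expectation (\<lambda>\<omega>. (G \<omega>)^2) = (\<integral>st. (\<integral>\<omega>. \<phi> \<omega> (fst st) * \<phi> \<omega> (snd st) \<partial>M) \<partial>(?L \<Otimes>\<^sub>M ?L))"
  proof -
    have "expectation (\<lambda>\<omega>. (G \<omega>)^2) = expectation (\<lambda>\<omega>. \<integral>st. h (\<omega>, st) \<partial>(?L \<Otimes>\<^sub>M ?L))"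
      by (rule integral_cong_AE) (use hM hAE in \<open>auto elim: AE_mp\<close>)
    also have "\<dots> = integral\<^sup>L (M \<Otimes>\<^sub>M (?L \<Otimes>\<^sub>M ?L)) h" by (rule QQ.integral_fst'[OF hint])
    also have "\<dots> = (\<integral>st. (\<integral>\<omega>. \<phi> \<omega> (fst st) * \<phi> \<omega> (snd st) \<partial>M) \<partial>(?L \<Otimes>\<^sub>M ?L))"
      using QQ.integral_snd[OF hint'] by (simp add: h_def)
    finally show ?thesis .
  qed
  have inner: "(\<integral>\<omega>. \<phi> \<omega> (fst st) * \<phi> \<omega> (snd st) \<partial>M) \<le> indicator (B \<times> B) st * k st" for st
  proof -
    obtain s t where st: "st = (s, t)" by (cases st)
    have "(\<integral>\<omega>. \<phi> \<omega> (fst st) * \<phi> \<omega> (snd st) \<partial>M) = (\<integral>\<omega>. (indicator B s * indicator B t) * (g \<omega> s * g \<omega> t) \<partial>M)"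
      by (simp add: st \<phi>_def mult_ac)
    also have "\<dots> = (indicator B s * indicator B t) * expectation (\<lambda>\<omega>. g \<omega> s * g \<omega> t)"
      by (rule integral_mult_right_zero)
    also have "\<dots> \<le> indicator (B \<times> B) st * k st"
      using cov[of s t] by (simp add: st g_def indicator_times split: split_indicator)
    finally show ?thesis .
  qed
  have EG2le: "expectation (\<lambda>\<omega>. (G \<omega>)^2) \<le> (\<integral>p. indicator (B \<times> B) p * k p \<partial>(?L \<Otimes>\<^sub>M ?L))"
    unfolding EG2
  proof (rule integral_mono[OF _ _ inner])
    show "integrable (?L \<Otimes>\<^sub>M ?L) (\<lambda>st. \<integral>\<omega>. \<phi> \<omega> (fst st) * \<phi> \<omega> (snd st) \<partial>M)"
      by (rule QQ.integrable_snd[OF hint'])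
    show "integrable (?L \<Otimes>\<^sub>M ?L) (\<lambda>p. indicator (B \<times> B) p * k p)"
    proof (rule Bochner_Integration.integrable_bound[OF integrable_mult_right[OF iBB, of K]])
      show "AE p in ?L \<Otimes>\<^sub>M ?L. norm (indicator (B \<times> B) p * k p) \<le> norm (K * indicator (B \<times> B) p)"
        using kb by (intro AE_I2) (auto split: split_indicator intro: order_trans[OF kb abs_ge_self])
    qed simp
  qed
  define Y where "Y \<omega> = (1 / \<mu>) * (LINT s:B|?L. F \<omega> s)" for \<omega>
  have Ym[measurable]: "Y \<in> borel_measurable M"
  proof -
    have "case_prod (\<lambda>\<omega> s. indicator B s *\<^sub>R F \<omega> s) \<in> borel_measurable (M \<Otimes>\<^sub>M ?L)"
      by (simp add: split_beta')
    from lborel.borel_measurable_lebesgue_integral[OF this]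
    show ?thesis unfolding Y_def set_lebesgue_integral_def by simp
  qed
  have YAE: "AE \<omega> in M. Y \<omega> - m = G \<omega> / \<mu>"
    using PP.AE_integrable_fst'[OF \<phi>int]
  proof eventually_elim
    fix \<omega> assume "integrable ?L (\<lambda>s. \<phi> (fst (\<omega>, s)) (snd (\<omega>, s)))"
    then have i: "integrable ?L (\<phi> \<omega>)" by simp
    have "(LINT s:B|?L. F \<omega> s) = (\<integral>s. \<phi> \<omega> s + m * indicator B s \<partial>?L)"
      unfolding set_lebesgue_integral_def
      by (rule Bochner_Integration.integral_cong[OF refl]) (simp add: \<phi>_def g_def algebra_simps)
    also have "\<dots> = G \<omega> + m * \<mu>"
      using i iB by (simp add: G_def \<mu>_def)
    finally show "Y \<omega> - m = G \<omega> / \<mu>"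
      using \<mu>pos by (simp add: Y_def field_simps)
  qed
  have Y2AE: "AE \<omega> in M. (Y \<omega> - m)^2 = (G \<omega>)^2 / \<mu>^2"
    using YAE by eventually_elim (simp add: power_divide)
  have Y2i: "integrable M (\<lambda>\<omega>. (Y \<omega> - m)^2)"
    by (rule integrable_cong_AE_imp[OF integrable_divide[OF G2i, of "\<mu>^2"]]) (use Y2AE in \<open>auto elim: AE_mp\<close>)
  have "variance Y \<le> expectation (\<lambda>\<omega>. (Y \<omega> - m)^2)" by (rule var_shift_le[OF Ym Y2i])
  also have "\<dots> = expectation (\<lambda>\<omega>. (G \<omega>)^2 / \<mu>^2)"
    by (rule integral_cong_AE) (use Y2AE in auto)
  also have "\<dots> = expectation (\<lambda>\<omega>. (G \<omega>)^2) / \<mu>^2" by simp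
  also have "\<dots> \<le> (\<integral>p. indicator (B \<times> B) p * k p \<partial>(?L \<Otimes>\<^sub>M ?L)) / \<mu>^2"
    using EG2le by (intro divide_right_mono) auto
  finally have fin: "variance Y \<le> (1 / \<mu>^2) * (\<integral>p. indicator (B \<times> B) p * k p \<partial>(?L \<Otimes>\<^sub>M ?L))" by simp
  have eqY: "(1 / measure lborel B) * (LINT s:B|lborel. F \<omega> s) = Y \<omega>" for \<omega>
    by (simp add: Y_def \<mu>_def)
  have eqY': "(\<lambda>\<omega>. (1 / measure lborel B) * (LINT s:B|lborel. F \<omega> s)) = Y"
    using eqY by (intro ext) (simp only:)
  show ?thesis unfolding eqY eqY' using fin unfolding \<mu>_def .
qed



lemma A_compact:
  fixes A :: "(real^2) set"
  assumes "is_disk A \<or> is_square A"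
  shows "compact A"
  using assms
proof
  assume "is_disk A" then show ?thesis by (auto simp: is_disk_def)
next
  assume "is_square A"
  then obtain p e1 e2 L where A: "A = {p + a *\<^sub>R e1 + b *\<^sub>R e2 | a b. a \<in> {0..L} \<and> b \<in> {0..L}}"
    unfolding is_square_def by blast
  have "A = (\<lambda>z. p + fst z *\<^sub>R e1 + snd z *\<^sub>R e2) ` ({0..L} \<times> {0..L})"
    unfolding A by (fastforce simp: image_iff)
  moreover have "compact ((\<lambda>z. p + fst z *\<^sub>R e1 + snd z *\<^sub>R e2) ` ({0..L::real} \<times> {0..L}))"
    by (intro compact_continuous_image compact_Times compact_Icc continuous_intros)
  ultimately show ?thesis by simp
qed

lemma emeas_scale:
  fixes A :: "(real^2) set" and l :: real
  assumes A: "compact A" and l: "l \<noteq> 0"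
  shows "emeasure lborel ((\<lambda>x. l *\<^sub>R x) ` A) = ennreal (l^2) * emeasure lborel A"
proof -
  let ?S = "(\<lambda>x. l *\<^sub>R x) ` A"
  let ?T = "\<lambda>x::real^2. 0 + l *\<^sub>R x"
  have Sc: "compact ?S" using A by (rule compact_scaling)
  have S: "?S \<in> sets borel" using Sc by (intro borel_closed compact_imp_closed)
  have Ab: "A \<in> sets borel" using A by (intro borel_closed compact_imp_closed)
  have eq: "lborel = density (distr lborel borel ?T) (\<lambda>_. ennreal (\<bar>l\<bar>^DIM(real^2)))"
    using lborel_affine[OF l, of "0::real^2"] by simp
  have "emeasure lborel ?S = emeasure (density (distr lborel borel ?T) (\<lambda>_. ennreal (\<bar>l\<bar>^DIM(real^2)))) ?S"
    using arg_cong[where f="\<lambda>N. emeasure N ?S", OF eq] .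
  also have "\<dots> = (\<integral>\<^sup>+x. ennreal (\<bar>l\<bar>^DIM(real^2)) * indicator ?S x \<partial>(distr lborel borel ?T))"
    using S by (subst emeasure_density) auto
  also have "\<dots> = ennreal (\<bar>l\<bar>^DIM(real^2)) * emeasure (distr lborel borel ?T) ?S"
    using S by (subst nn_integral_cmult_indicator) auto
  also have "emeasure (distr lborel borel ?T) ?S = emeasure lborel (?T -` ?S \<inter> space lborel)"
    using S by (subst emeasure_distr) auto
  also have "?T -` ?S \<inter> space lborel = A"
    using l by auto
  also have "\<bar>l\<bar>^DIM(real^2) = l^2" by simp
  finally show ?thesis .
qed

lemma meas_scale:
  fixes A :: "(real^2) set" and l :: real
  assumes A: "compact A" and l: "l \<noteq> 0"
  shows "measure lborel ((\<lambda>x. l *\<^sub>R x) ` A) = l^2 * measure lborel A"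
  using emeas_scale[OF A l] by (simp add: measure_def enn2real_mult)

lemma int_k_bound:
  fixes B :: "(real^2) set" and \<epsilon> H :: real
  assumes Bc: "compact B" and e: "\<epsilon> \<ge> 0" and H: "H \<ge> 0"
  shows "(\<integral>p. indicator (B \<times> B) p * (\<epsilon> + (if dist (fst p) (snd p) \<le> H then 1 else 0)) \<partial>(lborel \<Otimes>\<^sub>M lborel))
     \<le> \<epsilon> * (measure lborel B)^2 + measure lborel B * measure lborel (cball (0::real^2) H)"
proof -
  define \<mu> where "\<mu> = measure lborel B"
  define V where "V = measure lborel (cball (0::real^2) H)"
  have B[measurable]: "B \<in> sets lborel" using Bc by (simp add: borel_closed compact_imp_closed)
  have Bfin: "emeasure lborel B < \<infinity>" using Bc by (intro emeasure_bounded_finite compact_imp_bounded)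
  have iB: "integrable lborel (indicator B :: _ \<Rightarrow> real)" using Bfin by (intro integrable_real_indicator B)
  have Vc: "measure lborel (cball c H) = V" for c :: "real^2"
    using H by (simp add: V_def content_cball)
  have iC: "integrable lborel (indicator (cball c H) :: _ \<Rightarrow> real)" for c :: "real^2"
    using emeasure_lborel_cball_finite[of c H] by (intro integrable_real_indicator) auto
  define f where "f p = indicator (B \<times> B) p * (\<epsilon> + (if dist (fst p) (snd p) \<le> H then 1 else 0 :: real))" for p :: "(real^2) \<times> (real^2)"
  have fm[measurable]: "f \<in> borel_measurable (lborel \<Otimes>\<^sub>M lborel)"
    unfolding f_def by measurable
  have BB: "B \<times> B \<in> sets (lborel \<Otimes>\<^sub>M lborel)" by (intro pair_measureI B)
  have iBB: "integrable (lborel \<Otimes>\<^sub>M lborel) (indicator (B \<times> B) :: _ \<Rightarrow> real)"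
    using Bfin lborel.emeasure_pair_measure_Times[OF B B]
    by (intro integrable_real_indicator BB) (simp add: ennreal_mult_less_top)
  have fi: "integrable (lborel \<Otimes>\<^sub>M lborel) f"
  proof (rule Bochner_Integration.integrable_bound[OF integrable_mult_right[OF iBB, of "\<epsilon> + 1"] fm])
    show "AE p in lborel \<Otimes>\<^sub>M lborel. norm (f p) \<le> norm ((\<epsilon> + 1) * indicator (B \<times> B) p)"
      using e by (intro AE_I2) (auto simp: f_def split: split_indicator)
  qed
  have "(\<integral>p. f p \<partial>(lborel \<Otimes>\<^sub>M lborel)) = (\<integral>s. \<integral>t. f (s, t) \<partial>lborel \<partial>lborel)"
    by (rule lborel_pair.integral_fst'[OF fi, symmetric])
  also have "\<dots> \<le> (\<integral>s. indicator B s * (\<epsilon> * \<mu> + V) \<partial>lborel)"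
  proof (rule integral_mono)
    show "integrable lborel (\<lambda>s. \<integral>t. f (s, t) \<partial>lborel)" by (rule lborel_pair.integrable_fst'[OF fi])
    show "integrable lborel (\<lambda>s. indicator B s * (\<epsilon> * \<mu> + V))" using iB by simp
    fix s :: "real^2"
    have "(\<integral>t. f (s, t) \<partial>lborel) \<le> (\<integral>t. indicator B s * (\<epsilon> * indicator B t + indicator (cball s H) t) \<partial>lborel)"
    proof (rule integral_mono)
      show "integrable lborel (\<lambda>t. f (s, t))"
      proof (rule Bochner_Integration.integrable_bound[OF integrable_mult_right[OF iB, of "\<epsilon> + 1"]])
        show "AE t in lborel. norm (f (s, t)) \<le> norm ((\<epsilon> + 1) * indicator B t)"
          using e by (intro AE_I2) (auto simp: f_def split: split_indicator)
      qed (simp add: f_def)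
      show "integrable lborel (\<lambda>t. indicator B s * (\<epsilon> * indicator B t + indicator (cball s H) t))"
        using iB iC[of s] by simp
      fix t :: "real^2"
      show "f (s, t) \<le> indicator B s * (\<epsilon> * indicator B t + indicator (cball s H) t)"
        using e by (auto simp: f_def mem_cball split: split_indicator)
    qed
    also have "\<dots> = indicator B s * (\<epsilon> * \<mu> + V)"
      using iB iC[of s] by (simp add: \<mu>_def Vc)
    finally show "(\<integral>t. f (s, t) \<partial>lborel) \<le> indicator B s * (\<epsilon> * \<mu> + V)" .
  qed
  also have "\<dots> = \<mu> * (\<epsilon> * \<mu> + V)" by (simp add: \<mu>_def)
  finally show ?thesis by (simp add: f_def \<mu>_def V_def power2_eq_square algebra_simps)
qed



lemma (in isg) shifted_sq_int:
  assumes u: "u \<ge> 0"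
  shows "integrable M (\<lambda>w. (max 0 (X s w - u) - c)^2)"
proof -
  have "(\<lambda>w. (max 0 (X s w - u) - c)^2) = (\<lambda>w. (max 0 (X s w - u))^2 - 2 * c * max 0 (X s w - u) + c^2)"
    by (auto simp: power2_eq_square algebra_simps)
  then show ?thesis using fX2[OF u, of s] fXi[OF u, of s] by (simp add: prob_space)
qed

lemma (in isg) R1_bound:
  fixes B :: "(real^2) set" and \<epsilon> H u :: real
  assumes u: "u \<ge> 0" and Bc: "compact B" and Bpos: "measure lborel B > 0"
    and e: "\<epsilon> \<ge> 0" and H: "H \<ge> 0" and rho: "\<And>h. h \<ge> H \<Longrightarrow> \<bar>\<rho> h\<bar> \<le> \<epsilon>"
    and Xj: "(\<lambda>(\<omega>, s). X s \<omega>) \<in> borel_measurable (M \<Otimes>\<^sub>M lborel)"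
  shows "R1 M X u B \<le> \<epsilon> + measure lborel (cball (0::real^2) H) / measure lborel B"
proof -
  define m where "m = expectation (\<lambda>w. max 0 (X 0 w - u))"
  define k where "k p = \<epsilon> + (if dist (fst p) (snd p) \<le> H then 1 else 0 :: real)" for p :: "(real^2) \<times> (real^2)"
  have B[measurable]: "B \<in> sets lborel" using Bc by (simp add: borel_closed compact_imp_closed)
  have Bfin: "emeasure lborel B < \<infinity>" using Bc by (intro emeasure_bounded_finite compact_imp_bounded)
  have Fm: "(\<lambda>p. max 0 (X (snd p) (fst p) - u)) \<in> borel_measurable (M \<Otimes>\<^sub>M lborel)"
  proof -
    have "(\<lambda>p. X (snd p) (fst p)) \<in> borel_measurable (M \<Otimes>\<^sub>M lborel)" using Xj by (simp add: split_beta')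
    then show ?thesis by measurable
  qed
  have ms: "m = expectation (\<lambda>w. max 0 (X s w - u))" for s unfolding m_def by (rule Ef_eq)
  have "R1 M X u B \<le> (1 / (measure lborel B)^2) * (\<integral>p. indicator (B \<times> B) p * k p \<partial>(lborel \<Otimes>\<^sub>M lborel))"
    unfolding R1_def
  proof (rule var_avg_bound[where F="\<lambda>\<omega> s. max 0 (X s \<omega> - u)" and m=m and K="\<epsilon> + 1"])
    show "(\<lambda>p. max 0 (X (snd p) (fst p) - u)) \<in> borel_measurable (M \<Otimes>\<^sub>M lborel)" by (rule Fm)
    show "B \<in> sets lborel" by (rule B)
    show "emeasure lborel B < \<infinity>" by (rule Bfin)
    show "measure lborel B > 0" by (rule Bpos)
    show "integrable M (\<lambda>\<omega>. (max 0 (X s \<omega> - u) - m)^2)" for s by (rule shifted_sq_int[OF u])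
    show "expectation (\<lambda>\<omega>. (max 0 (X s \<omega> - u) - m)^2) \<le> 1" for s
      using varU[OF u, of s] ms[of s] by simp
    show "k \<in> borel_measurable (lborel \<Otimes>\<^sub>M lborel)" unfolding k_def by measurable
    show "\<bar>k p\<bar> \<le> \<epsilon> + 1" for p using e by (simp add: k_def)
    show "expectation (\<lambda>\<omega>. (max 0 (X s \<omega> - u) - m) * (max 0 (X t \<omega> - u) - m)) \<le> k (s, t)" for s t
    proof (cases "dist s t \<le> H")
      case True
      have "expectation (\<lambda>\<omega>. (max 0 (X s \<omega> - u) - m) * (max 0 (X t \<omega> - u) - m)) \<le> 1"
        using cov_le1[OF u, where sa=0 and s=s and t=t] unfolding m_def by linarith
      then show ?thesis using True e by (simp add: k_def)
    next
      case False
      then have st: "s \<noteq> t" using H by auto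
      have "expectation (\<lambda>\<omega>. (max 0 (X s \<omega> - u) - m) * (max 0 (X t \<omega> - u) - m)) \<le> \<bar>\<rho> (norm (s - t))\<bar>"
        using cov_rho[OF u st, where sa=0] unfolding m_def by linarith
      also have "\<dots> \<le> \<epsilon>" using False by (intro rho) (simp add: dist_norm)
      finally show ?thesis using False by (simp add: k_def)
    qed
  qed
  also have "\<dots> \<le> (1 / (measure lborel B)^2) * (\<epsilon> * (measure lborel B)^2 + measure lborel B * measure lborel (cball (0::real^2) H))"
    using int_k_bound[OF Bc e H] by (intro mult_left_mono) (simp_all add: k_def)
  also have "\<dots> = \<epsilon> + measure lborel (cball (0::real^2) H) / measure lborel B"
    using Bpos by (simp add: field_simps power2_eq_square)
  finally show ?thesis .
qed

theorem corollary3: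
  fixes M :: "'a measure" and X :: "real^2 \<Rightarrow> 'a \<Rightarrow> real" and \<rho> :: "real \<Rightarrow> real"
    and u :: real and A :: "(real^2) set"
  assumes "isotropic_standard_gaussian M X \<rho>"
    and "(\<lambda>(\<omega>, s). X s \<omega>) \<in> borel_measurable (M \<Otimes>\<^sub>M lborel)"
    and "\<And>h1 h2. 0 \<le> h1 \<Longrightarrow> h1 \<le> h2 \<Longrightarrow> \<rho> h2 \<le> \<rho> h1"
    and "(\<rho> \<longlongrightarrow> 0) at_top"
    and "u \<ge> 0"
    and "is_disk A \<or> is_square A"
  shows "((\<lambda>l. R1 M X u ((\<lambda>x. l *\<^sub>R x) ` A)) \<longlongrightarrow> 0) at_top"
proof -
  interpret isg M X \<rho> by (rule isg.intro) (rule assms(1))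
  have Ac: "compact A" by (rule A_compact[OF assms(6)])
  have Bc: "compact ((\<lambda>x. l *\<^sub>R x) ` A)" for l by (rule compact_scaling[OF Ac])
  have mB: "measure lborel ((\<lambda>x. l *\<^sub>R x) ` A) = l^2 * measure lborel A" if "l > 0" for l
    using meas_scale[OF Ac] that by simp
  have R1nn: "R1 M X u B \<ge> 0" for B
    unfolding R1_def by (rule Bochner_Integration.integral_nonneg) simp
  show ?thesis
  proof (cases "measure lborel A = 0")
    case True
    have "eventually (\<lambda>l. R1 M X u ((\<lambda>x. l *\<^sub>R x) ` A) = 0) at_top"
      using eventually_gt_at_top[of "0::real"]
    proof eventually_elim
      fix l :: real assume "l > 0"
      then have "measure lborel ((\<lambda>x. l *\<^sub>R x) ` A) = 0" using mB True by simp
      then show "R1 M X u ((\<lambda>x. l *\<^sub>R x) ` A) = 0" by (simp add: R1_def)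
    qed
    then show ?thesis by (rule tendsto_eventually)
  next
    case False
    then have Apos: "measure lborel A > 0" using measure_nonneg[of lborel A] by linarith
    show ?thesis
    proof (rule tendstoI)
      fix e :: real assume e: "e > 0"
      define \<epsilon> where "\<epsilon> = e / 3"
      have \<epsilon>: "\<epsilon> > 0" using e by (simp add: \<epsilon>_def)
      have "eventually (\<lambda>h. dist (\<rho> h) 0 < \<epsilon>) at_top" using tendstoD[OF assms(4) \<epsilon>] .
      then obtain N where N: "\<And>h. h \<ge> N \<Longrightarrow> \<bar>\<rho> h\<bar> < \<epsilon>" by (auto simp: eventually_at_top_linorder)
      define H where "H = max N 0"
      have H: "H \<ge> 0" by (simp add: H_def)
      have rho: "\<bar>\<rho> h\<bar> \<le> \<epsilon>" if "h \<ge> H" for h using N[of h] that by (simp add: H_def)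
      define V where "V = measure lborel (cball (0::real^2) H)"
      have V: "V \<ge> 0" by (simp add: V_def)
      define L0 where "L0 = 1 + 3 * V / (e * measure lborel A)"
      have L0: "L0 \<ge> 1" using V e Apos by (simp add: L0_def)
      have "eventually (\<lambda>l. l \<ge> L0) at_top" by (rule eventually_ge_at_top)
      then show "eventually (\<lambda>l. dist (R1 M X u ((\<lambda>x. l *\<^sub>R x) ` A)) 0 < e) at_top"
      proof eventually_elim
        fix l :: real assume l: "l \<ge> L0"
        then have l0: "l > 0" "l \<ge> 1" using L0 by auto
        define \<mu> where "\<mu> = measure lborel ((\<lambda>x. l *\<^sub>R x) ` A)"
        have \<mu>: "\<mu> = l^2 * measure lborel A" using mB[OF l0(1)] by (simp add: \<mu>_def)
        have \<mu>pos: "\<mu> > 0" using \<mu> l0 Apos by simp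
        have R: "R1 M X u ((\<lambda>x. l *\<^sub>R x) ` A) \<le> \<epsilon> + V / \<mu>"
          unfolding V_def \<mu>_def
          by (rule R1_bound[OF assms(5) Bc _ _ H rho assms(2)]) (use \<mu>pos \<epsilon> in \<open>simp_all add: \<mu>_def\<close>)
        have "V / \<mu> < \<epsilon>"
        proof -
          have "3 * V / (e * measure lborel A) < l" using l by (simp add: L0_def)
          also have "l \<le> l^2" using l0 by (simp add: power2_eq_square)
          finally have "3 * V < l^2 * (e * measure lborel A)"
            using e Apos by (simp add: divide_less_eq mult_pos_pos)
          then have "V < \<epsilon> * \<mu>" by (simp add: \<mu> \<epsilon>_def field_simps)
          then show ?thesis using \<mu>pos by (simp add: divide_less_eq)
        qed
        then have "R1 M X u ((\<lambda>x. l *\<^sub>R x) ` A) < e" using R e unfolding \<epsilon>_def by linarith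
        then show "dist (R1 M X u ((\<lambda>x. l *\<^sub>R x) ` A)) 0 < e"
          using R1nn[of "(\<lambda>x. l *\<^sub>R x) ` A"] by (simp add: dist_real_def)
      qed
    qed
  qed
qed


end
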